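(* Let $\mathcal A$ be an ordered normed algebra with unit $e$ whose algebra cone $\mathcal A^+$ is normal and closed (in the norm topology). Let $a,b\in\mathcal A$ with at least one of them positive. Then there exists $\delta>0$ such that there is no $x\in\mathcal A$ with $\|x\|<\delta$ and $ab-ba\geq e+x$.
   Context: A normed algebra $\mathcal A$ (real or complex, with submultiplicative norm) with unit $e$. A cone is a nonempty subset $\mathcal A^+\subseteq\mathcal A$ with $\mathcal A^++\mathcal A^+\subseteq\mathcal A^+$, $\lambda\mathcal A^+\subseteq\mathcal A^+$ for all $\lambda\geq 0$, and $\mathcal A^+\cap(-\mathcal A^+)=\{0\}$; it induces the partial order $a\leq b \iff b-a\in\mathcal A^+$. Elements of $\mathcal A^+$ are called positive. The cone is an algebra cone if $\mathcal A^+\cdot\mathcal A^+\subseteq\mathcal A^+$ and $e\in\mathcal A^+$; then $\mathcal A$ is called an ordered normed algebra. The cone is normal if there is a constant $\alpha>0$ such that $0\leq x\leq y$ implies $\|x\|\leq\alpha\|y\|$. *)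

theory Defs
  imports "HOL-Analysis.Analysis"
begin

definition cone :: "'a::real_vector set \<Rightarrow> bool" where
  "cone C \<longleftrightarrow> C \<noteq> {} \<and> (\<forall>x\<in>C. \<forall>y\<in>C. x + y \<in> C)
     \<and> (\<forall>x\<in>C. \<forall>l::real. l \<ge> 0 \<longrightarrow> l *\<^sub>R x \<in> C)
     \<and> C \<inter> uminus ` C = {0}"

definition algebra_cone :: "'a::{real_algebra, ring_1} set \<Rightarrow> bool" where
  "algebra_cone C \<longleftrightarrow> cone C \<and> (\<forall>x\<in>C. \<forall>y\<in>C. x * y \<in> C) \<and> 1 \<in> C"

text \<open>Normality: \<open>0 \<le> x \<le> y\<close> (i.e. \<open>x \<in> C\<close>, \<open>y - x \<in> C\<close>) implies \<open>norm x \<le> \<alpha> * norm y\<close>.\<close>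
definition normal_cone :: "'a::real_normed_vector set \<Rightarrow> bool" where
  "normal_cone C \<longleftrightarrow> (\<exists>\<alpha>>0. \<forall>x y. x \<in> C \<and> y - x \<in> C \<longrightarrow> norm x \<le> \<alpha> * norm y)"

end

theory Submission
  imports Defs
begin

lemma main_lemma:
  fixes C :: "'a::{real_normed_algebra, ring_1} set" and p q :: 'a
  assumes ac: "algebra_cone C" and nc: "normal_cone C"
    and pC: "p \<in> C" and cC: "(p * q - q * p) - 1 \<in> C"
  shows False
proof -
  have add: "\<And>x y. x \<in> C \<Longrightarrow> y \<in> C \<Longrightarrow> x + y \<in> C"
    and sc: "\<And>x l. x \<in> C \<Longrightarrow> l \<ge> 0 \<Longrightarrow> l *\<^sub>R x \<in> C"
    and ml: "\<And>x y. x \<in> C \<Longrightarrow> y \<in> C \<Longrightarrow> x * y \<in> C"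
    and one: "1 \<in> C"
    and pt: "C \<inter> uminus ` C = {0}"
    using ac unfolding algebra_cone_def cone_def by auto
  have anti: "z = 0" if "z \<in> C" "- z \<in> C" for z
  proof -
    have "z \<in> uminus ` C" using that(2) by (metis image_eqI minus_minus)
    then show ?thesis using that(1) pt by blast
  qed
  obtain \<alpha> where ap: "\<alpha> > 0" and nrm: "\<And>x y. x \<in> C \<Longrightarrow> y - x \<in> C \<Longrightarrow> norm x \<le> \<alpha> * norm y"
    using nc unfolding normal_cone_def by blast
  have pn: "p ^ n \<in> C" for n
    by (induction n) (auto simp: one ml pC)
  define D where "D n = p ^ n * q - q * p ^ n" for n
  have DC: "D (Suc n) - real (Suc n) *\<^sub>R p ^ n \<in> C" for n
  proof (induction n)
    case 0
    then show ?case using cC by (simp add: D_def)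
  next
    case (Suc n)
    define u where "u = D (Suc n) - real (Suc n) *\<^sub>R p ^ n"
    define v where "v = (p * q - q * p) - 1"
    have "D (Suc (Suc n)) = p * D (Suc n) + (p * q - q * p) * p ^ Suc n"
      by (simp add: D_def algebra_simps mult.assoc power_commutes)
    also have "\<dots> = real (Suc (Suc n)) *\<^sub>R p ^ Suc n + (p * u + v * p ^ Suc n)"
      unfolding u_def v_def
      by (simp add: algebra_simps scaleR_conv_of_real mult.assoc power_commutes scaleR_2)
    finally have "D (Suc (Suc n)) - real (Suc (Suc n)) *\<^sub>R p ^ Suc n = p * u + v * p ^ Suc n"
      by simp
    moreover have "p * u + v * p ^ Suc n \<in> C"
      using Suc u_def v_def cC pC pn add ml by blast
    ultimately show ?case by simp
  qed
  define K where "K = \<alpha> * (2 * norm q * norm p)"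
  have bound: "real (Suc n) * norm (p ^ n) \<le> \<alpha> * (2 * norm q * norm (p ^ Suc n))" for n
  proof -
    have xC: "real (Suc n) *\<^sub>R p ^ n \<in> C" using sc pn by simp
    have "norm (real (Suc n) *\<^sub>R p ^ n) \<le> \<alpha> * norm (D (Suc n))"
      using nrm[OF xC DC] .
    also have "norm (D (Suc n)) \<le> 2 * norm q * norm (p ^ Suc n)"
    proof -
      have "norm (D (Suc n)) \<le> norm (p ^ Suc n * q) + norm (q * p ^ Suc n)"
        unfolding D_def by (rule norm_triangle_ineq4)
      also have "\<dots> \<le> norm (p ^ Suc n) * norm q + norm q * norm (p ^ Suc n)"
        by (intro add_mono norm_mult_ineq)
      finally show ?thesis by simp
    qed
    then have "\<alpha> * norm (D (Suc n)) \<le> \<alpha> * (2 * norm q * norm (p ^ Suc n))"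
      using ap by (intro mult_left_mono) auto
    finally show ?thesis by simp
  qed
  have zero_down: "p ^ n = 0" if "p ^ Suc n = 0" for n
  proof -
    have "real (Suc n) * norm (p ^ n) \<le> 0" using bound[of n] that by simp
    then have "norm (p ^ n) \<le> 0"
      by (metis mult_le_0_iff not_less of_nat_0_less_iff zero_less_Suc)
    then show ?thesis by simp
  qed
  obtain N :: nat where N: "real N > K" using reals_Archimedean2 by blast
  have "p ^ N = 0"
  proof -
    have "real (Suc N) * norm (p ^ N) \<le> \<alpha> * (2 * norm q * (norm p * norm (p ^ N)))"
    proof -
      have "norm (p ^ Suc N) \<le> norm p * norm (p ^ N)" by (simp add: norm_mult_ineq)
      then have "\<alpha> * (2 * norm q * norm (p ^ Suc N)) \<le> \<alpha> * (2 * norm q * (norm p * norm (p ^ N)))"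
        using ap by (intro mult_left_mono) auto
      then show ?thesis using bound[of N] by linarith
    qed
    then have "real (Suc N) * norm (p ^ N) \<le> K * norm (p ^ N)" unfolding K_def
      by (simp add: algebra_simps)
    then have "(real (Suc N) - K) * norm (p ^ N) \<le> 0" by (simp add: algebra_simps)
    moreover have "real (Suc N) - K > 0" using N by simp
    ultimately have "norm (p ^ N) \<le> 0"
      by (simp add: mult_le_0_iff)
    then show ?thesis by simp
  qed
  then have ex: "\<exists>m. p ^ m = 0" by blast
  define m where "m = (LEAST m. p ^ m = 0)"
  have pm: "p ^ m = 0" unfolding m_def using ex by (rule LeastI_ex)
  have "m \<noteq> 0" using pm by (metis power_0 zero_neq_one)
  then obtain k where mk: "m = Suc k" by (cases m) auto
  have "p ^ k = 0" using zero_down pm mk by blast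
  moreover have "k < m" using mk by simp
  ultimately show False using not_less_Least m_def by blast
qed

theorem corollary2p3:
  fixes C :: "'a::{real_normed_algebra, ring_1} set" and a b :: 'a
  assumes "algebra_cone C" and "normal_cone C" and "closed C"
    and "a \<in> C \<or> b \<in> C"
  shows "\<exists>\<delta>>0. \<not> (\<exists>x. norm x < \<delta> \<and> a * b - b * a - (1 + x) \<in> C)"
proof (rule ccontr)
  assume H: "\<not> ?thesis"
  have "a * b - b * a - 1 \<in> closure C"
    unfolding closure_approachable
  proof (intro allI impI)
    fix e :: real assume "e > 0"
    then obtain x where "norm x < e" "a * b - b * a - (1 + x) \<in> C" using H by blast
    then show "\<exists>y\<in>C. dist y (a * b - b * a - 1) < e"
      by (intro bexI[of _ "a * b - b * a - (1 + x)"]) (auto simp: dist_norm)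
  qed
  then have cC: "a * b - b * a - 1 \<in> C" using assms(3) by (simp add: closure_closed)
  show False
    using assms(4)
  proof
    assume "a \<in> C"
    then show False using main_lemma[OF assms(1,2) _ cC] by blast
  next
    assume "b \<in> C"
    moreover have "b * (- a) - (- a) * b - 1 \<in> C" using cC by simp
    ultimately show False using main_lemma[OF assms(1,2)] by blast
  qed
qed

end
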